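(* For a real number $u \geqslant 0$ and an integer $h \geqslant 2$, let $R_2(h,u)$ denote the number of pairs of integers $(m,n) \in (u,u+h]^2$ such that $mn$ is a perfect square. Then \[ R_2(h,u) \ll h \log h, \] where the implied constant is absolute.
   Context: The notation $X \ll Y$ means $|X| \leqslant cY$ for some absolute constant $c>0$. *)

theory Defs
  imports Complex_Main
begin

definition is_square :: "int \<Rightarrow> bool" where
  "is_square x \<longleftrightarrow> (\<exists>k::int. x = k ^ 2)"

definition R2 :: "int \<Rightarrow> real \<Rightarrow> nat" where
  "R2 h u = card {(m::int, n::int).
      u < of_int m \<and> of_int m \<le> u + of_int h \<and>
      u < of_int n \<and> of_int n \<le> u + of_int h \<and> is_square (m * n)}"

end

theory Submission imports Defs "HOL-Computational_Algebra.Nth_Powers" "HOL-Analysis.Harmonic_Numbers"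
begin

lemma sq_decomp_nat:
  fixes m n k :: nat
  assumes "m > 0" "n > 0" "m * n = k^2"
  shows "\<exists>d x y. d > 0 \<and> x > 0 \<and> y > 0 \<and> m = d * x^2 \<and> n = d * y^2"
proof -
  define g where "g = gcd m n"
  have gpos: "g > 0" using assms g_def by simp
  obtain a b where a0: "m = a * g" and b0: "n = b * g" and cop: "coprime a b"
    using gcd_coprime_exists[of m n] gpos unfolding g_def by blast
  have a: "m = g * a" using a0 by (simp only: mult.commute)
  have b: "n = g * b" using b0 by (simp only: mult.commute)
  have "g^2 dvd k^2" using assms(3) a b by (metis dvd_triv_left mult.assoc mult.left_commute power2_eq_square)
  hence "g dvd k" by simp
  then obtain t where t: "k = g * t" by (auto elim: dvdE)
  have "g^2 * (a*b) = g^2 * t^2" using assms(3) a b t by (simp add: power2_eq_square algebra_simps)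
  hence ab: "a * b = t^2" using gpos by simp
  have apos: "a > 0" "b > 0" using a b assms by auto
  have "is_nth_power 2 (a*b)" using ab by (simp add: is_nth_power_def)
  hence "is_nth_power 2 a" "is_nth_power 2 b" using is_nth_power_mult_coprime_natD[OF cop _ apos] by auto
  then obtain x y where "a = x^2" "b = y^2" by (auto simp: is_nth_power_def)
  thus ?thesis using a b gpos apos by (intro exI[of _ g] exI[of _ x] exI[of _ y]) auto
qed

lemma sq_decomp_int:
  fixes m n :: int
  assumes "m > 0" "n > 0" "Defs.is_square (m * n)"
  shows "\<exists>d x y. d \<ge> 1 \<and> x \<ge> 1 \<and> y \<ge> 1 \<and> m = d * x^2 \<and> n = d * y^2"
proof -
  obtain k where k: "m * n = k^2" using assms(3) by (auto simp: Defs.is_square_def)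
  have "nat m * nat n = (nat \<bar>k\<bar>)^2" using k assms
    by (metis abs_ge_zero nat_mult_distrib nat_power_eq power2_abs less_imp_le)
  then obtain d x y where "d > 0" "x > 0" "y > 0" "nat m = d * x^2" "nat n = d * y^2"
    using sq_decomp_nat[of "nat m" "nat n"] assms by auto
  thus ?thesis using assms
    by (intro exI[of _ "int d"] exI[of _ "int x"] exI[of _ "int y"]) (auto simp flip: of_nat_power of_nat_mult)
qed

lemma harm_int:
  fixes H :: int
  assumes "H \<ge> 1"
  shows "(\<Sum>d\<in>{1..H}. 1 / real_of_int d) \<le> 1 + ln (real_of_int H)"
proof (induction rule: int_ge_induct[OF assms])
  case 1 then show ?case by simp
next
  case (2 H)
  have H1: "H \<ge> 1" using 2 by simp
  have e: "{1..H+1} = insert (H+1) {1..H}" using H1 by auto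
  have "ln (real_of_int H / real_of_int (H+1)) \<le> real_of_int H / real_of_int (H+1) - 1"
    using H1 by (intro ln_le_minus_one) auto
  also have "\<dots> = - 1 / real_of_int (H+1)" using H1 by (simp add: field_simps)
  finally have "1 / real_of_int (H+1) \<le> ln (real_of_int (H+1)) - ln (real_of_int H)"
    using H1 by (simp add: ln_div)
  moreover have "(\<Sum>d\<in>{1..H+1}. 1 / real_of_int d) = 1 / real_of_int (H+1) + (\<Sum>d\<in>{1..H}. 1 / real_of_int d)"
    unfolding e by (subst sum.insert) auto
  ultimately show ?case using 2(2) by linarith
qed

lemma offdiag_bound:
  fixes S :: "int set" and d h :: int and u :: real
  assumes "finite S" "d \<ge> 1" "h \<ge> 1"
    and S: "\<And>x. x \<in> S \<Longrightarrow> x \<ge> 1 \<and> u < of_int (d * x^2) \<and> of_int (d * x^2) \<le> u + of_int h"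
  shows "int (card {(x,y). x \<in> S \<and> y \<in> S \<and> x \<noteq> y}) * d \<le> h - 1"
proof -
  define c where "c = card S"
  have eq: "{(x,y). x \<in> S \<and> y \<in> S \<and> x \<noteq> y} = S \<times> S - (\<lambda>x. (x,x)) ` S" by auto
  have "card {(x,y). x \<in> S \<and> y \<in> S \<and> x \<noteq> y} = c * c - c"
    unfolding eq c_def using assms(1)
    by (subst card_Diff_subset) (auto simp: card_cartesian_product card_image inj_on_def)
  show ?thesis
  proof (cases "c \<le> 1")
    case True
    then have "c * c - c = 0" by (cases c) auto
    then show ?thesis using \<open>card _ = c * c - c\<close> assms by simp
  next
    case False
    then have ne: "S \<noteq> {}" using c_def by auto
    define a where "a = Min S"
    define b where "b = Max S"
    have aS: "a \<in> S" and bS: "b \<in> S" using ne assms(1) a_def b_def by auto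
    have sub: "S \<subseteq> {a..b}" using assms(1) a_def b_def by auto
    have "c \<le> card {a..b}" unfolding c_def using sub by (intro card_mono) auto
    moreover have "a \<le> b" using aS sub by auto
    ultimately have cb: "int c \<le> b - a + 1" by simp
    have a1: "a \<ge> 1" using S aS by auto
    have "of_int (d * b^2) - of_int (d * a^2) < (of_int h :: real)" using S[OF aS] S[OF bS] by linarith
    hence diff: "d * b^2 - d * a^2 \<le> h - 1" by linarith
    have c2: "int c \<ge> 2" using False by simp
    have "int c - 1 \<le> b - a" using cb by simp
    moreover have "int c \<le> b + a" using cb a1 by simp
    ultimately have "(int c - 1) * int c \<le> (b - a) * (b + a)"
      using c2 by (intro mult_mono) auto
    hence "(int c - 1) * int c * d \<le> (b - a) * (b + a) * d" using assms(2) by (intro mult_right_mono) auto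
    also have "\<dots> = d * b^2 - d * a^2" by (simp add: power2_eq_square algebra_simps)
    finally have "(int c - 1) * int c * d \<le> h - 1" using diff by linarith
    moreover have "int (c * c - c) = (int c - 1) * int c" using c2 by (simp add: of_nat_diff algebra_simps)
    ultimately show ?thesis using \<open>card _ = c * c - c\<close> by simp
  qed
qed


theorem lemma2p1:
  shows "\<exists>c>0. \<forall>(h::int) (u::real). h \<ge> 2 \<longrightarrow> u \<ge> 0 \<longrightarrow>
           real (R2 h u) \<le> c * of_int h * ln (of_int h)"
proof (intro exI[of _ 4] conjI allI impI)
  fix h :: int and u :: real
  assume h2: "h \<ge> 2" and u0: "u \<ge> 0"
  define A where "A = {(m::int, n::int).
      u < of_int m \<and> of_int m \<le> u + of_int h \<and>
      u < of_int n \<and> of_int n \<le> u + of_int h \<and> Defs.is_square (m * n)}"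
  define S where "S d = {x::int. x \<ge> 1 \<and> u < of_int (d * x^2) \<and> of_int (d * x^2) \<le> u + of_int h}" for d
  define Off where "Off d = {(x,y). x \<in> S d \<and> y \<in> S d \<and> x \<noteq> y}" for d
  define g where "g d = (\<lambda>(x::int,y::int). (d * x^2, d * y^2))" for d :: int
  define D where "D = (\<lambda>m. (m,m)) ` {\<lfloor>u\<rfloor>+1..\<lfloor>u\<rfloor>+h}"
  have finS: "finite (S d)" if "d \<ge> 1" for d
  proof (rule finite_subset[of _ "{1..\<lceil>u\<rceil>+h}"])
    show "S d \<subseteq> {1..\<lceil>u\<rceil>+h}"
    proof
      fix x assume x: "x \<in> S d"
      hence x1: "x \<ge> 1" by (simp add: S_def)
      have "x \<le> d * x^2" using x1 that
        by (metis mult_le_cancel_left1 mult_right_mono power2_eq_square mult.commute less_le_trans zero_less_one order.trans nle_le zero_le_one)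
      hence "of_int x \<le> (of_int (d * x^2) :: real)" by (simp only: of_int_le_iff)
      moreover have "of_int (d * x^2) \<le> u + of_int h" using x by (simp only: S_def mem_Collect_eq)
      ultimately have "of_int x \<le> u + of_int h" by linarith
      hence "x \<le> \<lceil>u\<rceil> + h" by (smt (verit) le_of_int_ceiling of_int_add of_int_le_iff)
      thus "x \<in> {1..\<lceil>u\<rceil>+h}" using x1 by simp
    qed
  qed auto
  have offb: "real (card (Off d)) \<le> of_int h / of_int d" if "d \<ge> 1" for d
  proof -
    have "int (card (Off d)) * d \<le> h - 1"
      unfolding Off_def
    proof (rule offdiag_bound[OF finS[OF that] that])
      show "1 \<le> h" using h2 by simp
      fix x assume "x \<in> S d"
      thus "1 \<le> x \<and> u < of_int (d * x^2) \<and> of_int (d * x^2) \<le> u + of_int h"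
        by (simp only: S_def mem_Collect_eq)
    qed
    hence "of_int (int (card (Off d)) * d) \<le> (of_int (h - 1) :: real)" by (simp only: of_int_le_iff)
    hence "real (card (Off d)) * of_int d \<le> of_int h" by simp
    thus ?thesis using that by (simp add: field_simps)
  qed
  have sub: "A \<subseteq> D \<union> (\<Union>d\<in>{1..h-1}. g d ` Off d)"
  proof
    fix p assume "p \<in> A"
    then obtain m n where p: "p = (m,n)" and mu: "u < of_int m" "of_int m \<le> u + of_int h"
      and nu: "u < of_int n" "of_int n \<le> u + of_int h" and sq: "Defs.is_square (m*n)"
      by (auto simp: A_def)
    show "p \<in> D \<union> (\<Union>d\<in>{1..h-1}. g d ` Off d)"
    proof (cases "m = n")
      case True
      have "\<lfloor>u\<rfloor> + 1 \<le> m" using mu by linarith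
      moreover have "m \<le> \<lfloor>u\<rfloor> + h" using mu by linarith
      ultimately show ?thesis using True p by (auto simp: D_def)
    next
      case False
      have pos: "m > 0" "n > 0" using mu nu u0 by linarith+
      obtain d x y where dxy: "d \<ge> 1" "x \<ge> 1" "y \<ge> 1" "m = d * x^2" "n = d * y^2"
        using sq_decomp_int[OF pos sq] by blast
      have xy: "x \<noteq> y" using False dxy by auto
      have "x^2 \<noteq> y^2" using xy dxy by (simp add: power2_eq_iff_nonneg)
      hence "\<bar>x^2 - y^2\<bar> \<ge> 1" by linarith
      hence "d * 1 \<le> d * \<bar>x^2 - y^2\<bar>" using dxy by (intro mult_left_mono) auto
      also have "\<dots> = \<bar>d * (x^2 - y^2)\<bar>" using dxy(1) by (simp add: abs_mult)
      also have "\<dots> = \<bar>m - n\<bar>" using dxy by (simp add: right_diff_distrib)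
      also have "\<bar>m - n\<bar> \<le> h - 1" using mu nu by linarith
      finally have dh: "d \<le> h - 1" by simp
      have "(x,y) \<in> Off d" using dxy mu nu xy by (auto simp: Off_def S_def)
      hence "p \<in> g d ` Off d" using p dxy by (auto simp: g_def image_iff intro!: bexI[of _ "(x,y)"])
      thus ?thesis using dh dxy by auto
    qed
  qed
  have finOff: "finite (Off d)" if "d \<ge> 1" for d
  proof (rule finite_subset)
    show "Off d \<subseteq> S d \<times> S d" unfolding Off_def by auto
    show "finite (S d \<times> S d)" using finS[OF that] by simp
  qed
  have k1: "card A \<le> card D + card (\<Union>d\<in>{1..h-1}. g d ` Off d)"
    by (rule order_trans[OF card_mono[OF _ sub] card_Un_le]) (auto simp: D_def intro!: finite_imageI finOff)
  have k2: "card D \<le> nat h" unfolding D_def using card_image_le[of "{\<lfloor>u\<rfloor>+1..\<lfloor>u\<rfloor>+h}" "\<lambda>m. (m,m)"] by simp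
  have k3: "card (\<Union>d\<in>{1..h-1}. g d ` Off d) \<le> (\<Sum>d\<in>{1..h-1}. card (g d ` Off d))" by (rule card_UN_le) simp
  have k4: "(\<Sum>d\<in>{1..h-1}. card (g d ` Off d)) \<le> (\<Sum>d\<in>{1..h-1}. card (Off d))" by (intro sum_mono card_image_le finOff) simp
  have "card A \<le> nat h + (\<Sum>d\<in>{1..h-1}. card (Off d))" using k1 k2 k3 k4 by linarith
  hence "real (card A) \<le> real (nat h + (\<Sum>d\<in>{1..h-1}. card (Off d)))" by (simp only: of_nat_le_iff)
  hence c1: "real (card A) \<le> of_int h + (\<Sum>d\<in>{1..h-1}. real (card (Off d)))" using h2 by simp
  have s1: "(\<Sum>d\<in>{1..h-1}. real (card (Off d))) \<le> of_int h * (1 + ln (of_int h))"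
  proof -
    have "(\<Sum>d\<in>{1..h-1}. real (card (Off d))) \<le> (\<Sum>d\<in>{1..h-1}. of_int h * (1 / of_int d))"
    proof (rule sum_mono)
      fix d assume "d \<in> {1..h-1}"
      then show "real (card (Off d)) \<le> of_int h * (1 / of_int d)" using offb[of d] by simp
    qed
    also have "\<dots> = of_int h * (\<Sum>d\<in>{1..h-1}. 1 / of_int d)" by (simp add: sum_distrib_left)
    also have "\<dots> \<le> of_int h * (1 + ln (of_int (h-1)))"
      using h2 by (intro mult_left_mono harm_int) auto
    also have "\<dots> \<le> of_int h * (1 + ln (of_int h))"
      using h2 by (intro mult_left_mono add_left_mono) auto
    finally show ?thesis .
  qed
  have c2: "real (card A) \<le> of_int h + of_int h * (1 + ln (of_int h))" using c1 s1 by linarith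
  have "ln (2::real) \<le> ln (of_int h)" using h2 by simp
  hence lnh: "ln (of_int h :: real) \<ge> 2/3" using ln2_ge_two_thirds by linarith
  have "real (R2 h u) = real (card A)" by (simp add: R2_def A_def)
  also have "\<dots> \<le> of_int h * (2 + ln (of_int h))" using c2 by (simp add: algebra_simps)
  also have "\<dots> \<le> of_int h * (4 * ln (of_int h))" using lnh h2 by (intro mult_left_mono) auto
  finally show "real (R2 h u) \<le> 4 * of_int h * ln (of_int h)" by (simp add: algebra_simps)
qed (simp)

end
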